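(* Let $m\ge3$ and let $G$ be an $m$-uniform hypergraph on vertex set $[n]$ with at least one edge. Then the signless Laplacian tensor of $G$ is not completely positive.
   Context: An $m$-uniform hypergraph $G=(V,E)$ with $V=[n]$ has edges that are sets of exactly $m$ distinct vertices. Its adjacency tensor $\mathcal{A}\in\mathbb{S}_{m,n}$ has entries $a_{i_1\ldots i_m}=1/(m-1)!$ if $\{i_1,\dots,i_m\}\in E$ and $0$ otherwise; $\mathcal{D}$ is the diagonal tensor with $d_{i\ldots i}$ equal to the degree of vertex $i$; the signless Laplacian tensor is $\mathcal{Q}=\mathcal{D}+\mathcal{A}$. A tensor $\mathcal{A}\in\mathbb{S}_{m,n}$ (symmetric real $m$th order $n$-dimensional) is completely positive if $\mathcal{A}=\sum_{k=1}^r(u^{(k)})^m$ for some $r\ge1$ and $u^{(k)}\in\mathbb{R}^n_+$, where $(u^m)_{i_1\ldots i_m}=u_{i_1}\cdots u_{i_m}$. *)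

theory Defs
  imports Complex_Main "HOL-Library.Multiset"
begin

text \<open>Tensors of order m and dimension n are functions on index lists; only lists of
length m with entries in {1..n} are meaningful.\<close>

definition tensor_index :: "nat \<Rightarrow> nat \<Rightarrow> nat list \<Rightarrow> bool" where
  "tensor_index m n is \<longleftrightarrow> length is = m \<and> set is \<subseteq> {1..n}"

definition uniform_hypergraph :: "nat \<Rightarrow> nat \<Rightarrow> nat set set \<Rightarrow> bool" where
  "uniform_hypergraph m n E \<longleftrightarrow> (\<forall>e\<in>E. e \<subseteq> {1..n} \<and> card e = m)"

definition hdegree :: "nat set set \<Rightarrow> nat \<Rightarrow> nat" where
  "hdegree E i = card {e\<in>E. i \<in> e}"

definition adjacency_tensor :: "nat \<Rightarrow> nat set set \<Rightarrow> nat list \<Rightarrow> real" where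
  "adjacency_tensor m E is =
     (if distinct is \<and> set is \<in> E then 1 / real (fact (m - 1)) else 0)"

definition degree_tensor :: "nat \<Rightarrow> nat set set \<Rightarrow> nat list \<Rightarrow> real" where
  "degree_tensor m E is =
     (if \<exists>i. is = replicate m i then real (hdegree E (hd is)) else 0)"

definition signless_laplacian :: "nat \<Rightarrow> nat set set \<Rightarrow> nat list \<Rightarrow> real" where
  "signless_laplacian m E is = degree_tensor m E is + adjacency_tensor m E is"

definition symmetric_tensor :: "nat \<Rightarrow> nat \<Rightarrow> (nat list \<Rightarrow> real) \<Rightarrow> bool" where
  "symmetric_tensor m n T \<longleftrightarrow>
     (\<forall>is js. tensor_index m n is \<and> mset js = mset is \<longrightarrow> T js = T is)"

definition completely_positive :: "nat \<Rightarrow> nat \<Rightarrow> (nat list \<Rightarrow> real) \<Rightarrow> bool" where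
  "completely_positive m n T \<longleftrightarrow> symmetric_tensor m n T \<and>
     (\<exists>r::nat. r \<ge> 1 \<and> (\<exists>u :: nat \<Rightarrow> nat \<Rightarrow> real.
        (\<forall>k<r. \<forall>i\<in>{1..n}. u k i \<ge> 0) \<and>
        (\<forall>is. tensor_index m n is \<longrightarrow> T is = (\<Sum>k<r. prod_list (map (u k) is)))))"

end

theory Submission
  imports Defs
begin

lemma prod_list_rep: "prod_list (map f (replicate j a @ [b])) = (f a :: real) ^ j * f b"
  by (induction j) auto

theorem mainTheorem5:
  fixes m n :: nat and E :: "nat set set"
  assumes "m \<ge> 3"
    and "uniform_hypergraph m n E"
    and "E \<noteq> {}"
  shows "\<not> completely_positive m n (signless_laplacian m E)"
proof
  assume cp: "completely_positive m n (signless_laplacian m E)"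
  then obtain r :: nat and u :: "nat \<Rightarrow> nat \<Rightarrow> real" where nn: "\<forall>k<r. \<forall>i\<in>{1..n}. u k i \<ge> (0::real)"
    and eq: "\<forall>is. tensor_index m n is \<longrightarrow> signless_laplacian m E is = (\<Sum>k<r. prod_list (map (u k) is))"
    unfolding completely_positive_def by (elim conjE exE) (rule that, assumption+)
  obtain e where eE: "e \<in> E" using assms(3) by blast
  have esub: "e \<subseteq> {1..n}" and ecard: "card e = m"
    using assms(2) eE unfolding uniform_hypergraph_def by auto
  have fin: "finite e" using ecard assms(1) card.infinite by fastforce
  define xs where "xs = sorted_list_of_set e"
  have xsd: "distinct xs" and xss: "set xs = e" and xsl: "length xs = m"
    using fin ecard by (auto simp: xs_def)
  define a where "a = xs ! 0"
  define b where "b = xs ! 1"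
  have ae: "a \<in> e" and be: "b \<in> e" using xsl xss assms(1) unfolding a_def b_def
    by (metis nth_mem less_le_trans zero_less_numeral numeral_le_iff semiring_norm(69) order.trans) 
       (metis nth_mem xsl xss assms(1) One_nat_def Suc_le_lessD dual_order.trans le_add2 numeral_3_eq_3 plus_1_eq_Suc)
  have ab: "a \<noteq> b" using xsd xsl assms(1) unfolding a_def b_def
    by (simp add: nth_eq_iff_index_eq)
  define js where "js = replicate (m-1) a @ [b]"
  have tjs: "tensor_index m n js" using assms(1) ae be esub
    unfolding tensor_index_def js_def by auto
  have ndjs: "\<not> distinct js"
  proof -
    obtain p where "m - 1 = Suc (Suc p)" using assms(1) by (metis Suc_diff_le diff_Suc_1 numeral_3_eq_3 Suc_le_D le_SucE)
    thus ?thesis unfolding js_def by simp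
  qed
  have nrep: "\<not> (\<exists>i. js = replicate m i)"
  proof
    assume "\<exists>i. js = replicate m i"
    then obtain i where "js = replicate m i" by blast
    moreover have "a \<in> set js" "b \<in> set js" using assms(1) unfolding js_def by auto
    ultimately show False using ab by simp
  qed
  have "signless_laplacian m E js = 0"
    using ndjs nrep unfolding signless_laplacian_def degree_tensor_def adjacency_tensor_def by auto
  hence s0: "(\<Sum>k<r. prod_list (map (u k) js)) = 0" using eq tjs by simp
  have pjs: "prod_list (map (u k) js) = u k a ^ (m-1) * u k b" for k
    unfolding js_def by (rule prod_list_rep)
  have tnn: "\<forall>k\<in>{..<r}. 0 \<le> prod_list (map (u k) js)"
  proof
    fix k assume "k \<in> {..<r}"
    hence "0 \<le> u k a" "0 \<le> u k b" using nn ae be esub by auto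
    thus "0 \<le> prod_list (map (u k) js)" by (simp add: pjs)
  qed
  have zero: "\<And>k. k < r \<Longrightarrow> u k a ^ (m-1) * u k b = 0"
  proof -
    fix k assume "k < r"
    have "\<forall>x\<in>{..<r}. prod_list (map (u x) js) = 0"
      using sum_nonneg_eq_0_iff[of "{..<r}" "\<lambda>k. prod_list (map (u k) js)"] tnn s0 by auto
    thus "u k a ^ (m-1) * u k b = 0" using \<open>k < r\<close> pjs by auto
  qed
  have txs: "tensor_index m n xs" using xsl xss esub unfolding tensor_index_def by auto
  have "adjacency_tensor m E xs > 0" using xsd xss eE unfolding adjacency_tensor_def by simp
  moreover have "degree_tensor m E xs \<ge> 0" unfolding degree_tensor_def by simp
  ultimately have "(\<Sum>k<r. prod_list (map (u k) xs)) > 0"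
    using eq txs unfolding signless_laplacian_def by fastforce
  then obtain k where kr: "k < r" and pk: "prod_list (map (u k) xs) \<noteq> 0"
  proof -
    assume h: "\<And>k. k < r \<Longrightarrow> prod_list (map (u k) xs) \<noteq> 0 \<Longrightarrow> thesis"
    show thesis
    proof (rule ccontr)
      assume "\<not> thesis"
      hence "\<forall>k\<in>{..<r}. prod_list (map (u k) xs) = 0" using h by auto
      hence "(\<Sum>k<r. prod_list (map (u k) xs)) = 0" by simp
      thus False using \<open>(\<Sum>k<r. prod_list (map (u k) xs)) > 0\<close> by simp
    qed
  qed
  have pp: "prod_list (map (u k) xs) = (\<Prod>i\<in>e. u k i)"
    using xsd xss by (metis prod.distinct_set_conv_list)
  have "u k a \<noteq> 0" using pk pp ae fin by (metis prod_zero_iff)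
  moreover have "u k b \<noteq> 0" using pk pp be fin by (metis prod_zero_iff)
  ultimately show False using zero[OF kr] by simp
qed

end
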